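(* Let $\mathcal{H}\subseteq\{0,1\}^{\mathcal{X}}$ be a concept class over an arbitrary domain $\mathcal{X}$ and let $m\in\mathbb{N}$. Then $\omega_m\le\omega^\star_m\le 2^m$, where $\omega_m$ and $\omega^\star_m$ are the clique number and fractional clique number of the contradiction graph $G_m(\mathcal{H})$.
   Context: For $m\in\mathbb{N}$, a dataset of size $m$ is a sequence $S=((x_1,y_1),\dots,(x_m,y_m))\in(\mathcal{X}\times\{0,1\})^m$; a hypothesis $h\in\{0,1\}^{\mathcal{X}}$ is consistent with $S$ if $h(x_i)=y_i$ for all $i$; $S$ is $\mathcal{H}$-realizable if some $h\in\mathcal{H}$ is consistent with $S$. We write $(x,y)\in S$ if $(x,y)=(x_i,y_i)$ for some $i$. Let $V_m(\mathcal{H})$ be the set of $\mathcal{H}$-realizable datasets of size $m$. The contradiction graph of order $m$, $G_m(\mathcal{H})$, is the undirected graph with vertex set $V_m(\mathcal{H})$ in which two datasets $S,S'$ are adjacent iff there is $x\in\mathcal{X}$ with $(x,0)\in S$ and $(x,1)\in S'$. $\omega_m$ is the clique number of $G_m(\mathcal{H})$ (supremum of sizes of cliques). A fractional clique of a graph $G=(V,E)$ is a function $\delta:V\to[0,\infty)$ with $\sum_{v\in I}\delta(v)\le 1$ for every independent set $I$ of $G$; its size is $|\delta|=\sum_{v\in V}\delta(v)$; the fractional clique number $\omega^\star(G)$ is the supremum of the sizes of fractional cliques, and $\omega^\star_m:=\omega^\star(G_m(\mathcal{H}))$. *)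

theory Defs
  imports "HOL-Analysis.Analysis"
begin

text \<open>Labels 0/1 are rendered as False/True. A dataset of size m is a list of
  length m of labelled points; a hypothesis is a function 'x => bool.\<close>

type_synonym 'x dataset = "('x \<times> bool) list"

definition consistent :: "('x \<Rightarrow> bool) \<Rightarrow> 'x dataset \<Rightarrow> bool" where
  "consistent h S \<longleftrightarrow> (\<forall>i < length S. h (fst (S ! i)) = snd (S ! i))"

definition realizable :: "('x \<Rightarrow> bool) set \<Rightarrow> 'x dataset \<Rightarrow> bool" where
  "realizable H S \<longleftrightarrow> (\<exists>h\<in>H. consistent h S)"

definition realizable_datasets :: "('x \<Rightarrow> bool) set \<Rightarrow> nat \<Rightarrow> 'x dataset set" where
  "realizable_datasets H m = {S. length S = m \<and> realizable H S}"

definition contra_adj :: "'x dataset \<Rightarrow> 'x dataset \<Rightarrow> bool" where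
  "contra_adj S S' \<longleftrightarrow>
     (\<exists>x. ((x, False) \<in> set S \<and> (x, True) \<in> set S') \<or> ((x, False) \<in> set S' \<and> (x, True) \<in> set S))"

definition is_clique :: "('x \<Rightarrow> bool) set \<Rightarrow> nat \<Rightarrow> 'x dataset set \<Rightarrow> bool" where
  "is_clique H m C \<longleftrightarrow> C \<subseteq> realizable_datasets H m \<and>
     (\<forall>S\<in>C. \<forall>S'\<in>C. S \<noteq> S' \<longrightarrow> contra_adj S S')"

definition is_indep :: "('x \<Rightarrow> bool) set \<Rightarrow> nat \<Rightarrow> 'x dataset set \<Rightarrow> bool" where
  "is_indep H m I \<longleftrightarrow> I \<subseteq> realizable_datasets H m \<and>
     (\<forall>S\<in>I. \<forall>S'\<in>I. S \<noteq> S' \<longrightarrow> \<not> contra_adj S S')"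

definition set_size :: "'a set \<Rightarrow> ennreal" where
  "set_size A = (if finite A then of_nat (card A) else \<infinity>)"

definition clique_number :: "('x \<Rightarrow> bool) set \<Rightarrow> nat \<Rightarrow> ennreal" where
  "clique_number H m = (SUP C \<in> {C. is_clique H m C}. set_size C)"

definition is_frac_clique :: "('x \<Rightarrow> bool) set \<Rightarrow> nat \<Rightarrow> ('x dataset \<Rightarrow> real) \<Rightarrow> bool" where
  "is_frac_clique H m \<delta> \<longleftrightarrow> (\<forall>S. \<delta> S \<ge> 0) \<and>
     (\<forall>I. is_indep H m I \<longrightarrow> (\<Sum>\<^sub>\<infinity>S\<in>I. ennreal (\<delta> S)) \<le> 1)"

definition frac_clique_size :: "('x \<Rightarrow> bool) set \<Rightarrow> nat \<Rightarrow> ('x dataset \<Rightarrow> real) \<Rightarrow> ennreal" where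
  "frac_clique_size H m \<delta> = (\<Sum>\<^sub>\<infinity>S\<in>realizable_datasets H m. ennreal (\<delta> S))"

definition frac_clique_number :: "('x \<Rightarrow> bool) set \<Rightarrow> nat \<Rightarrow> ennreal" where
  "frac_clique_number H m = (SUP \<delta> \<in> {\<delta>. is_frac_clique H m \<delta>}. frac_clique_size H m \<delta>)"

end

theory Submission
  imports Defs
begin

lemma cons_mem: "consistent g S \<Longrightarrow> (x,b) \<in> set S \<Longrightarrow> g x = b"
  unfolding consistent_def by (metis fst_conv in_set_conv_nth snd_conv)

lemma enn_infsum_le:
  fixes f :: "'a \<Rightarrow> ennreal"
  assumes "\<And>F. finite F \<Longrightarrow> F \<subseteq> A \<Longrightarrow> sum f F \<le> b"
  shows "infsum f A \<le> b"
  using infsum_le_finite_sums[of f A b] assms nonneg_summable_on_complete[of A f] by simp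

lemma enn_sum_le_infsum:
  fixes f :: "'a \<Rightarrow> ennreal"
  assumes "finite F" "F \<subseteq> A"
  shows "sum f F \<le> infsum f A"
proof -
  have "infsum f A = (SUP F\<in>{F. finite F \<and> F\<subseteq>A}. sum f F)"
    by (rule nonneg_infsum_complete) auto
  thus ?thesis using assms by (metis (mono_tags, lifting) SUP_upper mem_Collect_eq)
qed

lemma enn_infsum_mono_set:
  fixes f :: "'a \<Rightarrow> ennreal"
  assumes "C \<subseteq> A"
  shows "infsum f C \<le> infsum f A"
  by (rule enn_infsum_le) (use assms enn_sum_le_infsum in blast)

lemma part1:
  fixes H :: "('x \<Rightarrow> bool) set"
  assumes "is_clique H m C"
  shows "set_size C \<le> frac_clique_number H m"
proof -
  define \<delta> :: "'x dataset \<Rightarrow> real" where "\<delta> S = (if S \<in> C then 1 else 0)" for S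
  have fc: "is_frac_clique H m \<delta>"
    unfolding is_frac_clique_def
  proof (intro conjI allI impI)
    fix S show "0 \<le> \<delta> S" by (simp add: \<delta>_def)
  next
    fix I assume I: "is_indep H m I"
    show "(\<Sum>\<^sub>\<infinity>S\<in>I. ennreal (\<delta> S)) \<le> 1"
    proof (rule enn_infsum_le)
      fix F assume F: "finite F" "F \<subseteq> I"
      have "(\<Sum>S\<in>F. ennreal (\<delta> S)) = (\<Sum>S\<in>F \<inter> C. 1)"
        using F(1) by (simp add: \<delta>_def sum.If_cases Int_def ennreal_of_nat_eq_real_of_nat)
      also have "\<dots> = of_nat (card (F \<inter> C))" by simp
      also have "card (F \<inter> C) \<le> 1"
      proof -
        have "\<forall>a1\<in>F \<inter> C. \<forall>a2\<in>F \<inter> C. a1 = a2"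
          using I F assms unfolding is_indep_def is_clique_def by blast
        thus ?thesis using F(1) card_le_Suc0_iff_eq by (metis One_nat_def finite_Int)
      qed
      hence "of_nat (card (F \<inter> C)) \<le> (1::ennreal)" by (metis of_nat_le_iff of_nat_1)
      finally show "(\<Sum>S\<in>F. ennreal (\<delta> S)) \<le> 1" .
    qed
  qed
  have CV: "C \<subseteq> realizable_datasets H m" using assms by (simp add: is_clique_def)
  have "set_size C \<le> frac_clique_size H m \<delta>"
  proof (cases "finite C")
    case True
    have "set_size C = (\<Sum>S\<in>C. ennreal (\<delta> S))" using True by (simp add: set_size_def \<delta>_def)
    also have "\<dots> \<le> frac_clique_size H m \<delta>"
      unfolding frac_clique_size_def using True CV by (rule enn_sum_le_infsum)
    finally show ?thesis .
  next
    case False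
    have "(\<Sum>\<^sub>\<infinity>S\<in>C. ennreal (\<delta> S)) = \<infinity>"
      by (rule infsum_superconst_infinite_ennreal[where b=1]) (use False in \<open>auto simp: \<delta>_def\<close>)
    moreover have "(\<Sum>\<^sub>\<infinity>S\<in>C. ennreal (\<delta> S)) \<le> frac_clique_size H m \<delta>"
      unfolding frac_clique_size_def using CV by (rule enn_infsum_mono_set)
    ultimately show ?thesis by (simp add: top_unique)
  qed
  also have "\<dots> \<le> frac_clique_number H m"
    unfolding frac_clique_number_def using fc by (intro SUP_upper) auto
  finally show ?thesis .
qed

lemma sum_if_card:
  "finite G \<Longrightarrow> (\<Sum>g\<in>G. if P g then (c::real) else 0) = c * card {g\<in>G. P g}"
  by (simp add: sum.If_cases Int_def)

lemma part2_finite: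
  fixes H :: "('x \<Rightarrow> bool) set"
  assumes fc: "is_frac_clique H m \<delta>" and F: "finite F" "F \<subseteq> realizable_datasets H m"
  shows "(\<Sum>S\<in>F. \<delta> S) \<le> 2 ^ m"
proof -
  have nn: "\<And>S. \<delta> S \<ge> 0" using fc by (simp add: is_frac_clique_def)
  define P where "P = (\<Union>S\<in>F. fst ` set S)"
  have finP: "finite P" unfolding P_def using F by auto
  define n where "n = card P"
  define G where "G = PiE P (\<lambda>_. (UNIV::bool set))"
  have finG: "finite G" unfolding G_def using finP by (simp add: finite_PiE)
  have cardG: "card G = 2 ^ n" unfolding G_def n_def using finP by (simp add: card_PiE)
  have each: "(\<Sum>S\<in>F. if consistent g S then \<delta> S else 0) \<le> 1" if "g \<in> G" for g
  proof -
    define I where "I = {S\<in>F. consistent g S}"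
    have "is_indep H m I"
      unfolding is_indep_def
    proof (intro conjI ballI impI)
      show "I \<subseteq> realizable_datasets H m" using F(2) by (auto simp: I_def)
    next
      fix S S' assume "S \<in> I" "S' \<in> I"
      hence c: "consistent g S" "consistent g S'" by (auto simp: I_def)
      show "\<not> contra_adj S S'"
      proof
        assume "contra_adj S S'"
        then obtain x where "((x, False) \<in> set S \<and> (x, True) \<in> set S') \<or> ((x, False) \<in> set S' \<and> (x, True) \<in> set S)"
          unfolding contra_adj_def by blast
        thus False using cons_mem[OF c(1)] cons_mem[OF c(2)] by metis
      qed
    qed
    hence "(\<Sum>\<^sub>\<infinity>S\<in>I. ennreal (\<delta> S)) \<le> 1" using fc by (simp add: is_frac_clique_def)
    moreover have "finite I" using F(1) by (simp add: I_def)
    ultimately have "(\<Sum>S\<in>I. ennreal (\<delta> S)) \<le> 1" by simp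
    hence "ennreal (\<Sum>S\<in>I. \<delta> S) \<le> ennreal 1" using nn by (simp add: sum_ennreal)
    hence "(\<Sum>S\<in>I. \<delta> S) \<le> 1" by (simp add: ennreal_le_iff2)
    moreover have "(\<Sum>S\<in>F. if consistent g S then \<delta> S else 0) = (\<Sum>S\<in>I. \<delta> S)"
      unfolding I_def using F(1) by (simp add: sum.inter_filter)
    ultimately show ?thesis by simp
  qed
  have cnt: "real (2 ^ (n - m)) \<le> real (card {g\<in>G. consistent g S})" if S: "S \<in> F" for S
  proof -
    obtain h where h: "consistent h S" using S F(2)
      by (auto simp: realizable_datasets_def realizable_def)
    have len: "length S = m" using S F(2) by (auto simp: realizable_datasets_def)
    define Q where "Q = fst ` set S"
    have QP: "Q \<subseteq> P" unfolding Q_def P_def using S by auto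
    have eq: "{g\<in>G. consistent g S} = PiE P (\<lambda>x. if x \<in> Q then {h x} else UNIV)"
    proof -
      have "consistent g S \<longleftrightarrow> (\<forall>x\<in>Q. g x = h x)" for g
      proof
        assume "consistent g S" show "\<forall>x\<in>Q. g x = h x"
        proof
          fix x assume "x \<in> Q"
          then obtain b where "(x, b) \<in> set S" unfolding Q_def by force
          thus "g x = h x" using cons_mem[OF \<open>consistent g S\<close>] cons_mem[OF h] by metis
        qed
      next
        assume a: "\<forall>x\<in>Q. g x = h x"
        show "consistent g S" unfolding consistent_def
        proof (intro allI impI)
          fix i assume "i < length S"
          hence "fst (S!i) \<in> Q" unfolding Q_def by auto
          thus "g (fst (S ! i)) = snd (S ! i)" using a h \<open>i < length S\<close>
            unfolding consistent_def by auto
        qed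
      qed
      thus ?thesis unfolding G_def using QP by (auto simp: PiE_def Pi_def)
    qed
    have "card {g\<in>G. consistent g S} = (\<Prod>x\<in>P. if x \<in> Q then 1 else 2)"
      unfolding eq using finP by (simp add: card_PiE if_distrib cong: if_cong)
    also have "\<dots> = 2 ^ card (P - Q)"
      using finP by (simp add: prod.If_cases Diff_eq Int_def)
    finally have c: "card {g\<in>G. consistent g S} = 2 ^ card (P - Q)" .
    have "card Q \<le> m" unfolding Q_def using len
      by (metis card_image_le card_length finite_set order_trans)
    moreover have "card (P - Q) = n - card Q"
      unfolding n_def using QP finP by (simp add: card_Diff_subset finite_subset)
    ultimately have "n - m \<le> card (P - Q)" by simp
    hence "(2::nat) ^ (n - m) \<le> 2 ^ card (P - Q)" by (simp add: power_increasing)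
    thus ?thesis using c by simp
  qed
  have "(\<Sum>S\<in>F. \<delta> S) * 2 ^ (n - m) = (\<Sum>S\<in>F. \<delta> S * real (2 ^ (n - m)))"
    by (simp add: sum_distrib_right)
  also have "\<dots> \<le> (\<Sum>S\<in>F. \<delta> S * real (card {g\<in>G. consistent g S}))"
    by (intro sum_mono mult_left_mono cnt nn)
  also have "\<dots> = (\<Sum>S\<in>F. \<Sum>g\<in>G. if consistent g S then \<delta> S else 0)"
    using finG by (simp add: sum_if_card mult.commute)
  also have "\<dots> = (\<Sum>g\<in>G. \<Sum>S\<in>F. if consistent g S then \<delta> S else 0)"
    by (rule sum.swap)
  also have "\<dots> \<le> (\<Sum>g\<in>G. 1)" by (intro sum_mono each)
  also have "\<dots> = 2 ^ n" using cardG by simp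
  also have "(2::real) ^ n \<le> 2 ^ m * 2 ^ (n - m)"
    by (simp add: power_add[symmetric])
  finally have "(\<Sum>S\<in>F. \<delta> S) * 2 ^ (n - m) \<le> 2 ^ m * 2 ^ (n - m)" .
  thus ?thesis by simp
qed

lemma part2:
  assumes fc: "is_frac_clique H m \<delta>"
  shows "frac_clique_size H m \<delta> \<le> 2 ^ m"
  unfolding frac_clique_size_def
proof (rule enn_infsum_le)
  fix F assume F: "finite F" "F \<subseteq> realizable_datasets H m"
  have nn: "\<And>S. \<delta> S \<ge> 0" using fc by (simp add: is_frac_clique_def)
  have "(\<Sum>S\<in>F. ennreal (\<delta> S)) = ennreal (\<Sum>S\<in>F. \<delta> S)" using nn by (simp add: sum_ennreal)
  also have "\<dots> \<le> ennreal (2 ^ m)" using part2_finite[OF fc F] by (simp add: ennreal_leI)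
  also have "ennreal (2 ^ m) = 2 ^ m" using ennreal_power[of 2 m] by simp
  finally show "(\<Sum>S\<in>F. ennreal (\<delta> S)) \<le> 2 ^ m" .
qed

theorem mainTheorem1:
  fixes H :: "('x \<Rightarrow> bool) set" and m :: nat
  shows "clique_number H m \<le> frac_clique_number H m \<and> frac_clique_number H m \<le> 2 ^ m"
proof
  show "clique_number H m \<le> frac_clique_number H m"
    unfolding clique_number_def by (rule SUP_least) (use part1 in auto)
  show "frac_clique_number H m \<le> 2 ^ m"
    unfolding frac_clique_number_def by (rule SUP_least) (use part2 in auto)
qed

end
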